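(* Let $d\ge 3$ be an integer and let $(x,y)$ be an integer solution of \[ d(2x+d+1)\left(x^2+(d+1)x+\frac{d(d+1)}{2}\right)=2y^3 . \] Then there are integers $y_1,y_2$ and a pair $(\alpha,\beta)\in\mathcal{A}_d^{(3)}$ such that \[ 2x+d+1=\alpha y_1^3,\qquad x^2+(d+1)x+\frac{d(d+1)}{2}=\beta y_2^3 . \]
   Context: For an integer $m$, $[m]\in\{0,1,2\}$ denotes the residue with $m\equiv[m]\pmod 3$. For a prime $q$ let $\mu_q=\operatorname{ord}_q(d^2-1)$ and $\nu_q=\operatorname{ord}_q(d)$. To each prime $q$ associate a set $T_q\subseteq\{0,1,2\}^2$: if $q\nmid d(d^2-1)$, $T_q=\{(0,0)\}$. For $q=2$: $T_2=\{(0,[1-\nu_2])\}$ if $2\mid d$; $T_2=\{(1,0),(0,1),(2,2)\}$ if $2\nmid d$ and $\mu_2\ge 4$; $T_2=\{(1,0),(0,1)\}$ if $2\nmid d$ and $\mu_2=3$. For odd $q\mid d$: $T_q=\{([-\nu_q],0),(0,[-\nu_q])\}$. For odd $q\mid d^2-1$: $T_q=\{(0,0),(1,2),(2,1)\}$ if $\mu_q\ge 2$, and $T_q=\{(0,0),(2,1)\}$ if $\mu_q=1$. Then $\mathcal{A}_d^{(3)}$ is the set of pairs of positive integers $(\alpha,\beta)$ with $(\operatorname{ord}_q(\alpha),\operatorname{ord}_q(\beta))\in T_q$ for every prime $q$. *)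

theory Defs
  imports "HOL-Computational_Algebra.Primes"
begin

definition res3 :: "int \<Rightarrow> nat" where
  "res3 m = nat (m mod 3)"

definition Tset :: "int \<Rightarrow> int \<Rightarrow> (nat \<times> nat) set" where
  "Tset d q =
    (let mu = multiplicity q (d^2 - 1); nu = multiplicity q d in
     if \<not> q dvd d * (d^2 - 1) then {(0, 0)}
     else if q = 2 then
       (if q dvd d then {(0, res3 (1 - int nu))}
        else if mu \<ge> 4 then {(1, 0), (0, 1), (2, 2)}
        else if mu = 3 then {(1, 0), (0, 1)}
        else {})
     else if q dvd d then {(res3 (- int nu), 0), (0, res3 (- int nu))}
     else if mu \<ge> 2 then {(0, 0), (1, 2), (2, 1)}
     else if mu = 1 then {(0, 0), (2, 1)}
     else {})"

definition A3 :: "int \<Rightarrow> (int \<times> int) set" where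
  "A3 d = {(\<alpha>, \<beta>). \<alpha> > 0 \<and> \<beta> > 0 \<and>
      (\<forall>q::int. prime q \<longrightarrow> (multiplicity q \<alpha>, multiplicity q \<beta>) \<in> Tset d q)}"

end

theory Submission
  imports Defs
begin


lemma odd_sq: "odd (d::int) \<Longrightarrow> 8 dvd d^2 - 1"
proof -
  assume "odd d"
  then obtain k where k: "d = 2*k+1" by (metis oddE)
  have "even (k*(k+1))" by simp
  then obtain m where m: "k*(k+1) = 2*m" by blast
  have "d^2 - 1 = 4*(k*(k+1))" using k by (simp add: power2_eq_square algebra_simps)
  then have "d^2 - 1 = 8*m" using m by simp
  then show ?thesis by simp
qed

lemma sq9: "d \<ge> (3::int) \<Longrightarrow> d^2 \<ge> 9"
proof -
  assume "d \<ge> 3"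
  then have "3 * 3 \<le> d * d" using mult_mono[of 3 d 3 d] by simp
  then show ?thesis by (simp add: power2_eq_square)
qed

lemma T_0: "\<not> q dvd d*(d^2-1) \<Longrightarrow> Tset d q = {(0,0)}"
  unfolding Tset_def Let_def by (simp only: if_True if_False not_True_eq_False not_False_eq_True simp_thms)
lemma T_a: "q dvd d*(d^2-1) \<Longrightarrow> q = 2 \<Longrightarrow> q dvd d \<Longrightarrow> Tset d q = {(0, res3 (1 - int (multiplicity q d)))}"
  unfolding Tset_def Let_def by (simp only: if_True if_False not_True_eq_False not_False_eq_True simp_thms)
lemma T_b: "q dvd d*(d^2-1) \<Longrightarrow> q = 2 \<Longrightarrow> \<not> q dvd d \<Longrightarrow> multiplicity q (d^2-1) \<ge> 4 \<Longrightarrow> Tset d q = {(1, 0), (0, 1), (2, 2)}"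
  unfolding Tset_def Let_def by (simp only: if_True if_False not_True_eq_False not_False_eq_True simp_thms)
lemma T_c: "q dvd d*(d^2-1) \<Longrightarrow> q = 2 \<Longrightarrow> \<not> q dvd d \<Longrightarrow> multiplicity q (d^2-1) = 3 \<Longrightarrow> Tset d q = {(1, 0), (0, 1)}"
  unfolding Tset_def Let_def by (simp only: if_True if_False not_True_eq_False not_False_eq_True simp_thms) simp
lemma T_d: "q dvd d*(d^2-1) \<Longrightarrow> q \<noteq> 2 \<Longrightarrow> q dvd d \<Longrightarrow> Tset d q = {(res3 (- int (multiplicity q d)), 0), (0, res3 (- int (multiplicity q d)))}"
  unfolding Tset_def Let_def by (simp only: if_True if_False not_True_eq_False not_False_eq_True simp_thms)
lemma T_e: "q dvd d*(d^2-1) \<Longrightarrow> q \<noteq> 2 \<Longrightarrow> \<not> q dvd d \<Longrightarrow> multiplicity q (d^2-1) \<ge> 2 \<Longrightarrow> Tset d q = {(0, 0), (1, 2), (2, 1)}"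
  unfolding Tset_def Let_def by (simp only: if_True if_False not_True_eq_False not_False_eq_True simp_thms)
lemma T_f: "q dvd d*(d^2-1) \<Longrightarrow> q \<noteq> 2 \<Longrightarrow> \<not> q dvd d \<Longrightarrow> multiplicity q (d^2-1) = 1 \<Longrightarrow> Tset d q = {(0, 0), (2, 1)}"
  unfolding Tset_def Let_def by (simp only: if_True if_False not_True_eq_False not_False_eq_True simp_thms) simp

lemma res3_eq: "int k = X mod 3 \<Longrightarrow> k = res3 X"
  unfolding res3_def by auto

lemma mod3_aux: "(n + b) mod 3 = (0::nat) \<Longrightarrow> int (b mod 3) = (- int n) mod 3"
proof -
  assume h: "(n + b) mod 3 = 0"
  have "int (b mod 3) = int b mod 3" by (simp add: zmod_int)
  moreover have "3 dvd int n + int b" using h by presburger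
  ultimately show ?thesis by presburger
qed

lemma key:
  fixes d q :: int and a b :: nat
  assumes d3: "d \<ge> 3" and q: "prime q"
    and H0: "(multiplicity q d + a + b) mod 3 = (if q = 2 then 1 else 0)"
    and H1: "\<not> q dvd (d^2 - 1) \<Longrightarrow> a = 0 \<or> b = 0"
    and H2: "q = 2 \<Longrightarrow> multiplicity q (d^2-1) = 3 \<Longrightarrow> a \<ge> 2 \<Longrightarrow> b = 1"
    and H3: "q \<noteq> 2 \<Longrightarrow> multiplicity q (d^2-1) = 1 \<Longrightarrow> a \<ge> 1 \<Longrightarrow> b = 1"
    and H4: "q = 2 \<Longrightarrow> q dvd d \<Longrightarrow> a = 0"
  shows "(a mod 3, b mod 3) \<in> Tset d q"
proof -
  have nz: "d^2 - 1 \<noteq> 0" using sq9[OF d3] by linarith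
  have dd: "d^2 - 1 = (d - 1) * (d + 1)" by (simp add: power2_eq_square algebra_simps)
  have cop: "\<not> q dvd (d^2-1)" if "q dvd d"
  proof
    assume "q dvd d^2 - 1"
    moreover have "q dvd d^2" using that by (simp add: power2_eq_square)
    ultimately have "q dvd d^2 - (d^2 - 1)" by (rule dvd_diff[rotated])
    then have "q dvd 1" by simp
    then show False using q by (simp add: prime_int_iff)
  qed
  have nu0: "multiplicity q d = 0" if "\<not> q dvd d"
    using that by (simp add: not_dvd_imp_multiplicity_0)
  have mupos: "multiplicity q (d^2-1) \<ge> 1" if "q dvd (d^2-1)"
    using prime_multiplicity_gt_zero_iff[of q "d^2-1"] q nz that by auto
  have mu3: "multiplicity q (d^2-1) \<ge> 3" if "q = 2" "\<not> q dvd d"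
  proof -
    have "q^3 dvd d^2 - 1" using that odd_sq[of d] by simp
    then show ?thesis using q nz by (metis multiplicity_geI not_prime_unit)
  qed
  define nu where "nu = multiplicity q d"
  define mu where "mu = multiplicity q (d^2-1)"
  have H0': "(nu + a + b) mod 3 = (if q = 2 then 1 else 0)" using H0 unfolding nu_def .
  have H2': "q = 2 \<Longrightarrow> mu = 3 \<Longrightarrow> a \<ge> 2 \<Longrightarrow> b = 1" using H2 unfolding mu_def .
  have H3': "q \<noteq> 2 \<Longrightarrow> mu = 1 \<Longrightarrow> a \<ge> 1 \<Longrightarrow> b = 1" using H3 unfolding mu_def .
  have nu0': "\<not> q dvd d \<Longrightarrow> nu = 0" using nu0 unfolding nu_def .
  have mupos': "q dvd (d^2-1) \<Longrightarrow> mu \<ge> 1" using mupos unfolding mu_def .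
  have mu3': "q = 2 \<Longrightarrow> \<not> q dvd d \<Longrightarrow> mu \<ge> 3" using mu3 unfolding mu_def .
  note Ta = T_a[of q d, folded nu_def mu_def]
  note Tb = T_b[of q d, folded nu_def mu_def]
  note Tc = T_c[of q d, folded nu_def mu_def]
  note Td = T_d[of q d, folded nu_def mu_def]
  note Te = T_e[of q d, folded nu_def mu_def]
  note Tf = T_f[of q d, folded nu_def mu_def]
  show ?thesis
  proof (cases "q dvd d * (d^2 - 1)")
    case False
    then have nd: "\<not> q dvd d" and nd2: "\<not> q dvd d^2-1" by auto
    have qn2: "q \<noteq> 2"
    proof
      assume "q = 2"
      moreover have "even (d * (d^2 - 1))" by (cases "even d") (auto simp: dd)
      ultimately show False using False by simp
    qed
    have "(nu + a + b) mod 3 = 0" using H0' qn2 by simp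
    moreover have "nu = 0" using nu0' nd .
    moreover have "a = 0 \<or> b = 0" using H1 nd2 .
    ultimately have "a mod 3 = 0 \<and> b mod 3 = 0" by presburger
    then show ?thesis using T_0[OF False] by simp
  next
    case True
    show ?thesis
    proof (cases "q = 2")
      case q2: True
      show ?thesis
      proof (cases "q dvd d")
        case qd: True
        have T: "Tset d q = {(0, res3 (1 - int nu))}"
          using Ta[OF True q2 qd] .
        have a0: "a = 0" using H4 q2 qd by blast
        have "(nu + a + b) mod 3 = 1" using H0' q2 by simp
        then have "int (b mod 3) = (1 - int nu) mod 3" using a0 by presburger
        then have "b mod 3 = res3 (1 - int nu)" by (rule res3_eq)
        then show ?thesis using T a0 by simp
      next
        case qd: False
        have n0: "nu = 0" using nu0' qd .
        have "(nu + a + b) mod 3 = 1" using H0' q2 by simp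
        then have ab: "(a + b) mod 3 = 1" using n0 by simp
        have m3: "mu \<ge> 3" using mu3' q2 qd by blast
        show ?thesis
        proof (cases "mu \<ge> 4")
          case True
          have T: "Tset d q = {(1, 0), (0, 1), (2, 2)}"
            using Tb[OF \<open>q dvd d * (d^2 - 1)\<close> q2 qd True] .
          have "(a mod 3 = 1 \<and> b mod 3 = 0) \<or> (a mod 3 = 0 \<and> b mod 3 = 1) \<or> (a mod 3 = 2 \<and> b mod 3 = 2)"
            using ab by presburger
          then show ?thesis unfolding T by (elim disjE conjE) simp_all
        next
          case False
          then have m: "mu = 3" using m3 by simp
          have T: "Tset d q = {(1, 0), (0, 1)}"
            using Tc[OF \<open>q dvd d * (d^2 - 1)\<close> q2 qd m] .
          have "a \<ge> 2 \<Longrightarrow> b = 1" using H2' q2 m by blast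
          then have "(a mod 3 = 1 \<and> b mod 3 = 0) \<or> (a mod 3 = 0 \<and> b mod 3 = 1)"
            using ab by presburger
          then show ?thesis unfolding T by (elim disjE conjE) simp_all
        qed
      qed
    next
      case q2: False
      show ?thesis
      proof (cases "q dvd d")
        case qd: True
        have T: "Tset d q = {(res3 (- int nu), 0), (0, res3 (- int nu))}"
          using Td[OF True q2 qd] .
        have ab: "a = 0 \<or> b = 0" using H1 cop qd by blast
        have s0: "(nu + a + b) mod 3 = 0" using H0' q2 by simp
        have "(a = 0 \<and> int (b mod 3) = (- int nu) mod 3) \<or> (b = 0 \<and> int (a mod 3) = (- int nu) mod 3)"
          using ab
        proof
          assume a0: "a = 0"
          have h: "(nu + b) mod 3 = 0" using s0 a0 by simp
          show ?thesis using mod3_aux[OF h] a0 by blast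
        next
          assume b0: "b = 0"
          have h: "(nu + a) mod 3 = 0" using s0 b0 by simp
          show ?thesis using mod3_aux[OF h] b0 by blast
        qed
        then have "(a = 0 \<and> b mod 3 = res3 (- int nu)) \<or> (b = 0 \<and> a mod 3 = res3 (- int nu))"
          using res3_eq by blast
        then show ?thesis unfolding T by (elim disjE conjE) simp_all
      next
        case qd: False
        have n0: "nu = 0" using nu0' qd .
        have "(nu + a + b) mod 3 = 0" using H0' q2 by simp
        then have ab: "(a + b) mod 3 = 0" using n0 by simp
        have "q dvd d^2 - 1" using True qd q by (simp add: prime_dvd_mult_iff)
        then have m1: "mu \<ge> 1" using mupos' by blast
        show ?thesis
        proof (cases "mu \<ge> 2")
          case True
          have T: "Tset d q = {(0, 0), (1, 2), (2, 1)}"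
            using Te[OF \<open>q dvd d * (d^2 - 1)\<close> q2 qd True] .
          have "(a mod 3 = 0 \<and> b mod 3 = 0) \<or> (a mod 3 = 1 \<and> b mod 3 = 2) \<or> (a mod 3 = 2 \<and> b mod 3 = 1)"
            using ab by presburger
          then show ?thesis unfolding T by (elim disjE conjE) simp_all
        next
          case False
          then have m: "mu = 1" using m1 by simp
          have T: "Tset d q = {(0, 0), (2, 1)}"
            using Tf[OF \<open>q dvd d * (d^2 - 1)\<close> q2 qd m] .
          have "a \<ge> 1 \<Longrightarrow> b = 1" using H3' q2 m by blast
          then have "(a mod 3 = 0 \<and> b mod 3 = 0) \<or> (a mod 3 = 2 \<and> b mod 3 = 1)"
            using ab by presburger
          then show ?thesis unfolding T by (elim disjE conjE) simp_all
        qed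
      qed
    qed
  qed
qed


definition cf :: "int \<Rightarrow> int" where
  "cf n = (\<Prod>p\<in>prime_factors n. p ^ (multiplicity p n mod 3))"
definition cb :: "int \<Rightarrow> int" where
  "cb n = (\<Prod>p\<in>prime_factors n. p ^ (multiplicity p n div 3))"

lemma cf_cb: assumes False: "n \<noteq> 0" shows "\<bar>n\<bar> = cf n * cb n ^ 3"
proof -
  have "\<bar>n\<bar> = (\<Prod>p\<in>prime_factors n. p ^ multiplicity p n)"
    using prod_prime_factors[OF False] by simp
  also have "\<dots> = (\<Prod>p\<in>prime_factors n. p ^ (multiplicity p n mod 3) * (p ^ (multiplicity p n div 3)) ^ 3)"
  proof (intro prod.cong refl)
    fix p
    have "p ^ multiplicity p n = p ^ (multiplicity p n mod 3 + multiplicity p n div 3 * 3)"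
      by (simp only: mod_div_mult_eq)
    then show "p ^ multiplicity p n = p ^ (multiplicity p n mod 3) * (p ^ (multiplicity p n div 3)) ^ 3"
      by (simp only: power_add power_mult)
  qed
  also have "\<dots> = cf n * cb n ^ 3"
    by (simp add: cf_def cb_def prod.distrib prod_power_distrib)
  finally show ?thesis .
qed

lemma cf_pos: "cf n > 0"
  unfolding cf_def by (intro prod_pos) (auto intro: zero_less_power prime_gt_0_int)

lemma mult_cf: assumes "prime q" shows "multiplicity q (cf n) = multiplicity q n mod 3"
proof -
  have "multiplicity q (cf n) = (if q \<in> prime_factors n then multiplicity q n mod 3 else 0)"
    unfolding cf_def using assms by (intro multiplicity_prod_prime_powers) auto
  then show ?thesis using assms by (auto simp: prime_factors_multiplicity)
qed

lemma b_one_2: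
  fixes A B D :: int
  assumes e: "4*B = A^2 + D" and "D \<noteq> 0" "B \<noteq> 0" "multiplicity 2 D = 3" "16 dvd A^2"
  shows "multiplicity 2 B = 1"
proof -
  have nu: "\<not> is_unit (2::int)" by simp
  have d8: "2^3 dvd D" using multiplicity_dvd'[of 3 2 D] assms(4) by simp
  have nd16: "\<not> 2^4 dvd D"
  proof
    assume "2^4 dvd D"
    then have "4 \<le> multiplicity 2 D" using multiplicity_geI[OF assms(2) nu] by blast
    then show False using assms(4) by simp
  qed
  have "8 dvd A^2" using dvd_trans[of 8 16 "A^2"] assms(5) by simp
  moreover have "8 dvd D" using d8 by simp
  ultimately have "8 dvd 4*B" unfolding e by (rule dvd_add)
  then have "4*2 dvd 4*B" by simp
  then have b2: "2^1 dvd B" by (simp only: dvd_times_left_cancel_iff) simp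
  have nb4: "\<not> 2^2 dvd B"
  proof
    assume "2^2 dvd B"
    then have "4 dvd B" by simp
    then have "4*4 dvd 4*B" by (simp only: mult_dvd_mono[OF dvd_refl])
    then have "16 dvd 4*B" by simp
    moreover have "D = 4*B - A^2" using e by simp
    ultimately have "16 dvd D" using assms(5) by (simp add: dvd_diff)
    then show False using nd16 by simp
  qed
  show ?thesis using multiplicity_eqI[OF b2] nb4 by simp
qed

lemma b_one_odd:
  fixes A B D q :: int
  assumes q: "prime q" "q \<noteq> 2" and e: "4*B = A^2 + D" and "D \<noteq> 0" "B \<noteq> 0" "multiplicity q D = 1" "q^2 dvd A^2"
  shows "multiplicity q B = 1"
proof -
  have nu: "\<not> is_unit q" using q by auto
  have d1: "q dvd D" using multiplicity_dvd'[of 1 q D] assms(6) by simp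
  have nd2: "\<not> q^2 dvd D"
  proof
    assume "q^2 dvd D"
    then have "2 \<le> multiplicity q D" using multiplicity_geI[OF assms(4) nu] by blast
    then show False using assms(6) by simp
  qed
  have "q dvd A^2" using dvd_trans[of q "q^2" "A^2"] assms(7) by (simp add: power2_eq_square)
  then have "q dvd 4*B" using e d1 by simp
  moreover have "\<not> q dvd 4"
  proof
    assume "q dvd 4"
    then have "q dvd 2^2" by simp
    then have "q dvd 2" using q prime_dvd_power by blast
    then have "q = 2" using q primes_dvd_imp_eq[of q 2] by simp
    then show False using q by simp
  qed
  ultimately have b1: "q^1 dvd B" using q prime_dvd_mult_iff by auto
  have nb2: "\<not> q^Suc 1 dvd B"
  proof
    assume "q^Suc 1 dvd B"
    then have "q^2 dvd B" by (simp add: numeral_2_eq_2)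
    then have "q^2 dvd 4*B" by (rule dvd_mult)
    moreover have "D = 4*B - A^2" using e by simp
    ultimately have "q^2 dvd D" using assms(7) by (simp add: dvd_diff)
    then show False using nd2 by simp
  qed
  show ?thesis using multiplicity_eqI[OF b1 nb2] .
qed



lemma mult2: "prime (q::int) \<Longrightarrow> multiplicity q 2 = (if q = 2 then 1 else 0)"
  by (auto simp: multiplicity_self prime_multiplicity_other)

theorem lemma8p1:
  fixes d x y :: int
  assumes "d \<ge> 3"
    and "d * (2 * x + d + 1) * (x^2 + (d + 1) * x + d * (d + 1) div 2) = 2 * y^3"
  shows "\<exists>y1 y2 \<alpha> \<beta> :: int. (\<alpha>, \<beta>) \<in> A3 d \<and>
           2 * x + d + 1 = \<alpha> * y1^3 \<and>
           x^2 + (d + 1) * x + d * (d + 1) div 2 = \<beta> * y2^3"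
proof -
  define A where "A = 2 * x + d + 1"
  define B where "B = x^2 + (d + 1) * x + d * (d + 1) div 2"
  define D where "D = d^2 - 1"
  have eq: "d * A * B = 2 * y^3" using assms(2) unfolding A_def B_def .
  have d3: "d \<ge> 3" using assms(1) .
  define K where "K = d * (d + 1) div 2"
  have ev: "K * 2 = d * (d + 1)" unfolding K_def by simp
  have e4: "4 * B = A^2 + D"
  proof -
    have "4 * B = 4 * x^2 + 4 * (d+1) * x + 2 * (K * 2)"
      unfolding B_def K_def[symmetric] by (simp add: algebra_simps)
    also have "\<dots> = A^2 + D" unfolding ev A_def D_def by (simp add: power2_eq_square algebra_simps)
    finally show ?thesis .
  qed
  have D9: "D \<ge> 8" using sq9[OF d3] unfolding D_def by simp
  have Dnz: "D \<noteq> 0" using D9 by simp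
  have "A^2 \<ge> 0" by simp
  then have Bpos: "B > 0" using e4 D9 by linarith
  have dnz: "d \<noteq> 0" using d3 by simp
  have pe: "prime_elem q" if "prime q" for q :: int using that by auto
  have cfB: "(cf B, cb B) = (cf B, cb B)" by simp
  have Bdec: "B = cf B * cb B ^ 3" using cf_cb[of B] Bpos by simp
  show ?thesis
  proof (cases "A = 0")
    case False
    have ynz: "y \<noteq> 0" using eq False Bpos dnz by auto
    have H0: "(multiplicity q d + multiplicity q A + multiplicity q B) mod 3 = (if q = 2 then 1 else 0)"
      if q: "prime q" for q
    proof -
      have "multiplicity q (d * A * B) = multiplicity q d + multiplicity q A + multiplicity q B"
        using pe[OF q] dnz False Bpos by (simp add: prime_elem_multiplicity_mult_distrib)
      moreover have "multiplicity q (2 * y^3) = (if q = 2 then 1 else 0) + 3 * multiplicity q y"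
        using pe[OF q] ynz mult2[OF q]
        by (simp add: prime_elem_multiplicity_mult_distrib prime_elem_multiplicity_power_distrib)
      ultimately have S: "multiplicity q d + multiplicity q A + multiplicity q B = (if q = 2 then 1 else 0) + 3 * multiplicity q y"
        using eq by simp
      show ?thesis unfolding S by (cases "q = 2") simp_all
    qed
    have "(cf A, cf B) \<in> A3 d"
      unfolding A3_def
    proof (clarsimp simp: cf_pos)
      fix q :: int assume q: "prime q"
      have "(multiplicity q A mod 3, multiplicity q B mod 3) \<in> Tset d q"
      proof (rule key[OF d3 q H0[OF q]])
        show "multiplicity q A = 0 \<or> multiplicity q B = 0" if "\<not> q dvd d^2 - 1"
        proof (rule ccontr)
          assume "\<not> (multiplicity q A = 0 \<or> multiplicity q B = 0)"
          then have "q dvd A" "q dvd B"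
            using prime_multiplicity_gt_zero_iff[OF pe[OF q]] False Bpos by auto
          then have "q dvd 4 * B - A^2" by (simp add: power2_eq_square)
          then have "q dvd D" using e4 by simp
          then show False using that D_def by simp
        qed
        show "multiplicity q B = 1" if "q = 2" "multiplicity q (d^2-1) = 3" "2 \<le> multiplicity q A"
        proof -
          have "(2::int)^2 dvd A" using multiplicity_dvd'[of 2 2 A] that(1) that(3) by simp
          then have "4 dvd A" by simp
          then have "4*4 dvd A*A" using mult_dvd_mono by blast
          then have "16 dvd A^2" by (simp add: power2_eq_square)
          then show ?thesis using b_one_2[OF e4 Dnz] Bpos that D_def by simp
        qed
        show "multiplicity q B = 1" if "q \<noteq> 2" "multiplicity q (d^2-1) = 1" "1 \<le> multiplicity q A"
        proof -
          have "q^1 dvd A" using multiplicity_dvd'[OF that(3)] .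
          then have "q*q dvd A*A" by (simp add: mult_dvd_mono)
          then have "q^2 dvd A^2" by (simp add: power2_eq_square)
          then show ?thesis using b_one_odd[OF q that(1) e4 Dnz] Bpos that D_def by simp
        qed
        show "multiplicity q A = 0" if "q = 2" "q dvd d"
        proof -
          have "odd A" using that unfolding A_def by auto
          then show ?thesis using that by (simp add: not_dvd_imp_multiplicity_0)
        qed
      qed
      then show "(multiplicity q (cf A), multiplicity q (cf B)) \<in> Tset d q"
        using mult_cf[OF q] by simp
    qed
    moreover have "A = cf A * (sgn A * cb A)^3"
    proof -
      have "A = sgn A * \<bar>A\<bar>" by (simp add: mult_sgn_abs)
      also have "\<dots> = sgn A * (cf A * cb A ^ 3)" using cf_cb[OF False] by simp
      also have "\<dots> = cf A * (sgn A ^ 3 * cb A ^ 3)" using False by (simp add: sgn_if)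
      finally show ?thesis by (simp add: power_mult_distrib)
    qed
    ultimately show ?thesis using Bdec unfolding A_def B_def by blast
  next
    case True
    have odd: "odd d" using True unfolding A_def by presburger
    have e4': "4 * B = D" using e4 True by simp
    define E where "E = 2 * d^2 * B^2"
    have Enz: "E \<noteq> 0" unfolding E_def using dnz Bpos by simp
    have "(cf E, cf B) \<in> A3 d"
      unfolding A3_def
    proof (clarsimp simp: cf_pos)
      fix q :: int assume q: "prime q"
      have mE: "multiplicity q E = (if q = 2 then 1 else 0) + 2 * multiplicity q d + 2 * multiplicity q B"
        unfolding E_def using pe[OF q] dnz Bpos mult2[OF q]
        by (simp add: prime_elem_multiplicity_mult_distrib prime_elem_multiplicity_power_distrib)
      have H0: "(multiplicity q d + multiplicity q E + multiplicity q B) mod 3 = (if q = 2 then 1 else 0)"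
        unfolding mE by presburger
      have "(multiplicity q E mod 3, multiplicity q B mod 3) \<in> Tset d q"
      proof (rule key[OF d3 q H0])
        show "multiplicity q E = 0 \<or> multiplicity q B = 0" if "\<not> q dvd d^2 - 1"
        proof -
          have "\<not> q dvd B"
          proof
            assume "q dvd B"
            then have "q dvd D" using e4' by (metis dvd_mult)
            then show False using that D_def by simp
          qed
          then show ?thesis by (simp add: not_dvd_imp_multiplicity_0)
        qed
        show "multiplicity q B = 1" if "q = 2" "multiplicity q (d^2-1) = 3" "2 \<le> multiplicity q E"
          using b_one_2[of B 0 D] e4' Dnz Bpos that D_def by simp
        show "multiplicity q B = 1" if "q \<noteq> 2" "multiplicity q (d^2-1) = 1" "1 \<le> multiplicity q E"
          using b_one_odd[OF q that(1), of B 0 D] e4' Dnz Bpos that D_def by simp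
        show "multiplicity q E = 0" if "q = 2" "q dvd d"
          using that odd by simp
      qed
      then show "(multiplicity q (cf E), multiplicity q (cf B)) \<in> Tset d q"
        using mult_cf[OF q] by simp
    qed
    moreover have "A = cf E * 0^3" using True by simp
    ultimately show ?thesis using Bdec unfolding A_def B_def by blast
  qed
qed


end
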